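(* Let $(\mathcal{S},\mathcal{A},P,R,d_0,\gamma)$ be a finite Markov decision process with bounded reward and discount $\gamma\in[0,1)$, $\pi$ a policy, and $\lambda\in[0,1]$, and assume the Markov chain on states induced by $\pi$ is ergodic, with stationary distribution $d^\pi$. Let $\overleftarrow{G}_t=\sum_{i=1}^t(\lambda\gamma)^iR_{t-i}$. Then the limit $\lim_{t\to\infty}\mathbb{E}[\overleftarrow{G}_t\mid S_t=s]=: \overleftarrow{v}^\pi(s)$ exists, and the operator $\overleftarrow{\mathcal{T}}$ on functions $v:\mathcal{S}\to\mathbb{R}$ defined by $$(\overleftarrow{\mathcal{T}}v)(s)=\lambda\gamma\,\overleftarrow{r}^\pi(s)+\lambda\gamma\sum_{s'}\overleftarrow{P}^\pi(s'\mid s)\,v(s')$$ is a contraction mapping (in the sup norm); hence repeatedly applying it converges to $\overleftarrow{v}^\pi$.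
   Context: Trajectories: $S_0\sim d_0$, $A_t\sim\pi(\cdot\mid S_t)$, $S_{t+1}\sim P(\cdot\mid S_t,A_t)$, $R_t=R(S_t,A_t)$. Let $\overrightarrow{P}^\pi(s'\mid s)=\sum_a\pi(a\mid s)P(s'\mid s,a)$. The backward transition kernel is $\overleftarrow{P}^\pi(s'\mid s)=d^\pi(s)^{-1}d^\pi(s')\overrightarrow{P}^\pi(s\mid s')$ (probability that the previous state was $s'$ given the current state $s$), and the backward reward is $\overleftarrow{r}^\pi(s)=\sum_{s',a'}P(s\mid s',a')d^\pi(s')\pi(a'\mid s')d^\pi(s)^{-1}R(s',a')$ (expected reward received upon entering $s$). *)

theory Defs
  imports Complex_Main
begin

text \<open>Finite MDP: states of finite type 's, actions of finite type 'a.
  P s a s' = transition probability, pol s a = policy probability, R s a = reward.\<close>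

definition is_mdp :: "('s::finite \<Rightarrow> 'a::finite \<Rightarrow> 's \<Rightarrow> real) \<Rightarrow> ('s \<Rightarrow> real) \<Rightarrow> bool" where
  "is_mdp P d0 \<longleftrightarrow> (\<forall>s a s'. 0 \<le> P s a s') \<and> (\<forall>s a. (\<Sum>s'\<in>UNIV. P s a s') = 1)
     \<and> (\<forall>s. 0 \<le> d0 s) \<and> (\<Sum>s\<in>UNIV. d0 s) = 1"

definition is_policy :: "('s::finite \<Rightarrow> 'a::finite \<Rightarrow> real) \<Rightarrow> bool" where
  "is_policy pol \<longleftrightarrow> (\<forall>s a. 0 \<le> pol s a) \<and> (\<forall>s. (\<Sum>a\<in>UNIV. pol s a) = 1)"

definition Pfwd :: "('s::finite \<Rightarrow> 'a::finite \<Rightarrow> 's \<Rightarrow> real) \<Rightarrow> ('s \<Rightarrow> 'a \<Rightarrow> real) \<Rightarrow> 's \<Rightarrow> 's \<Rightarrow> real" where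
  "Pfwd P pol s s' = (\<Sum>a\<in>UNIV. pol s a * P s a s')"

fun Ppow :: "('s::finite \<Rightarrow> 's \<Rightarrow> real) \<Rightarrow> nat \<Rightarrow> 's \<Rightarrow> 's \<Rightarrow> real" where
  "Ppow Q 0 s s' = (if s = s' then 1 else 0)"
| "Ppow Q (Suc n) s s' = (\<Sum>u\<in>UNIV. Ppow Q n s u * Q u s')"

definition irreducible_chain :: "('s::finite \<Rightarrow> 's \<Rightarrow> real) \<Rightarrow> bool" where
  "irreducible_chain Q \<longleftrightarrow> (\<forall>s s'. \<exists>n. Ppow Q n s s' > 0)"

definition aperiodic_chain :: "('s::finite \<Rightarrow> 's \<Rightarrow> real) \<Rightarrow> bool" where
  "aperiodic_chain Q \<longleftrightarrow> (\<forall>s. Gcd {n::nat. n > 0 \<and> Ppow Q n s s > 0} = 1)"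

definition ergodic_chain :: "('s::finite \<Rightarrow> 's \<Rightarrow> real) \<Rightarrow> bool" where
  "ergodic_chain Q \<longleftrightarrow> irreducible_chain Q \<and> aperiodic_chain Q"

definition stationary_dist :: "('s::finite \<Rightarrow> 's \<Rightarrow> real) \<Rightarrow> ('s \<Rightarrow> real) \<Rightarrow> bool" where
  "stationary_dist Q d \<longleftrightarrow> (\<forall>s. 0 \<le> d s) \<and> (\<Sum>s\<in>UNIV. d s) = 1
     \<and> (\<forall>s. d s = (\<Sum>s'\<in>UNIV. d s' * Q s' s))"

definition state_prob :: "('s::finite \<Rightarrow> 'a::finite \<Rightarrow> 's \<Rightarrow> real) \<Rightarrow> ('s \<Rightarrow> 'a \<Rightarrow> real) \<Rightarrow> ('s \<Rightarrow> real)
    \<Rightarrow> nat \<Rightarrow> 's \<Rightarrow> real" where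
  "state_prob P pol d0 t s = (\<Sum>s0\<in>UNIV. d0 s0 * Ppow (Pfwd P pol) t s0 s)"

text \<open>E[R_j * 1{S_(j+k+1) = s}]: reward at time j jointly with the state k+1 steps later.\<close>
definition reward_joint :: "('s::finite \<Rightarrow> 'a::finite \<Rightarrow> 's \<Rightarrow> real) \<Rightarrow> ('s \<Rightarrow> 'a \<Rightarrow> real) \<Rightarrow> ('s \<Rightarrow> real)
    \<Rightarrow> ('s \<Rightarrow> 'a \<Rightarrow> real) \<Rightarrow> nat \<Rightarrow> nat \<Rightarrow> 's \<Rightarrow> real" where
  "reward_joint P pol d0 R j k s =
     (\<Sum>s'\<in>UNIV. \<Sum>a\<in>UNIV. \<Sum>s''\<in>UNIV.
        state_prob P pol d0 j s' * pol s' a * R s' a * P s' a s'' * Ppow (Pfwd P pol) k s'' s)"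

text \<open>E[ backward return G_t | S_t = s ] with G_t = sum_{i=1..t} (lambda gamma)^i R_(t-i).
  (Division by zero yields 0 in HOL; under ergodicity Pr(S_t = s) > 0 eventually.)\<close>
definition back_cond_return :: "('s::finite \<Rightarrow> 'a::finite \<Rightarrow> 's \<Rightarrow> real) \<Rightarrow> ('s \<Rightarrow> 'a \<Rightarrow> real) \<Rightarrow> ('s \<Rightarrow> real)
    \<Rightarrow> ('s \<Rightarrow> 'a \<Rightarrow> real) \<Rightarrow> real \<Rightarrow> real \<Rightarrow> nat \<Rightarrow> 's \<Rightarrow> real" where
  "back_cond_return P pol d0 R \<gamma> lam t s =
     (\<Sum>i\<in>{1..t}. (lam * \<gamma>) ^ i * reward_joint P pol d0 R (t - i) (i - 1) s) / state_prob P pol d0 t s"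

definition Pback :: "('s::finite \<Rightarrow> 'a::finite \<Rightarrow> 's \<Rightarrow> real) \<Rightarrow> ('s \<Rightarrow> 'a \<Rightarrow> real) \<Rightarrow> ('s \<Rightarrow> real)
    \<Rightarrow> 's \<Rightarrow> 's \<Rightarrow> real" where
  "Pback P pol d s s' = d s' * Pfwd P pol s' s / d s"

definition rback :: "('s::finite \<Rightarrow> 'a::finite \<Rightarrow> 's \<Rightarrow> real) \<Rightarrow> ('s \<Rightarrow> 'a \<Rightarrow> real) \<Rightarrow> ('s \<Rightarrow> real)
    \<Rightarrow> ('s \<Rightarrow> 'a \<Rightarrow> real) \<Rightarrow> 's \<Rightarrow> real" where
  "rback P pol d R s = (\<Sum>s'\<in>UNIV. \<Sum>a'\<in>UNIV. P s' a' s * d s' * pol s' a' * R s' a') / d s"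

definition Tback :: "('s::finite \<Rightarrow> 'a::finite \<Rightarrow> 's \<Rightarrow> real) \<Rightarrow> ('s \<Rightarrow> 'a \<Rightarrow> real) \<Rightarrow> ('s \<Rightarrow> real)
    \<Rightarrow> ('s \<Rightarrow> 'a \<Rightarrow> real) \<Rightarrow> real \<Rightarrow> real \<Rightarrow> ('s \<Rightarrow> real) \<Rightarrow> 's \<Rightarrow> real" where
  "Tback P pol d R \<gamma> lam v s =
     lam * \<gamma> * rback P pol d R s + lam * \<gamma> * (\<Sum>s'\<in>UNIV. Pback P pol d s s' * v s')"

definition supnorm :: "('s::finite \<Rightarrow> real) \<Rightarrow> real" where
  "supnorm v = Max (range (\<lambda>s. \<bar>v s\<bar>))"

end

theory Submission
  imports Defs
begin

definition stoch :: "('s::finite \<Rightarrow> 's \<Rightarrow> real) \<Rightarrow> bool" where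
  "stoch Q \<longleftrightarrow> (\<forall>s s'. 0 \<le> Q s s') \<and> (\<forall>s. (\<Sum>s'\<in>UNIV. Q s s') = 1)"

lemma Ppow_nonneg: "stoch Q \<Longrightarrow> 0 \<le> Ppow Q n s s'"
  by (induction n arbitrary: s') (auto simp: stoch_def intro!: sum_nonneg)

lemma Ppow_rowsum: "stoch Q \<Longrightarrow> (\<Sum>s'\<in>UNIV. Ppow Q n s s') = 1"
proof (induction n)
  case 0 then show ?case by simp
next
  case (Suc n)
  have "(\<Sum>s'\<in>UNIV. Ppow Q (Suc n) s s') = (\<Sum>u\<in>UNIV. Ppow Q n s u * (\<Sum>s'\<in>UNIV. Q u s'))"
    by (simp add: sum_distrib_left) (rule sum.swap)
  also have "\<dots> = 1" using Suc by (simp add: stoch_def)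
  finally show ?case .
qed

lemma Ppow_add: "Ppow Q (m + n) s s' = (\<Sum>u\<in>UNIV. Ppow Q m s u * Ppow Q n u s')"
proof (induction n arbitrary: s')
  case 0 then show ?case by (simp add: if_distrib cong: if_cong)
next
  case (Suc n)
  have "Ppow Q (m + Suc n) s s' = (\<Sum>v\<in>UNIV. (\<Sum>u\<in>UNIV. Ppow Q m s u * Ppow Q n u v) * Q v s')"
    using Suc by simp
  also have "\<dots> = (\<Sum>u\<in>UNIV. Ppow Q m s u * Ppow Q (Suc n) u s')"
    by (simp add: sum_distrib_left sum_distrib_right mult.assoc) (rule sum.swap)
  finally show ?case .
qed

lemma Ppow_ge: assumes "stoch Q" shows "Ppow Q m s u * Ppow Q n u s' \<le> Ppow Q (m + n) s s'"
proof -
  have "Ppow Q m s u * Ppow Q n u s' \<le> (\<Sum>v\<in>UNIV. Ppow Q m s v * Ppow Q n v s')"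
    by (rule member_le_sum[where f="\<lambda>v. Ppow Q m s v * Ppow Q n v s'"]) (auto intro!: mult_nonneg_nonneg Ppow_nonneg assms)
  then show ?thesis by (simp add: Ppow_add)
qed

lemma mult_in:
  assumes cl: "\<forall>a\<in>A. \<forall>b\<in>A. a + b \<in> A" and "a \<in> A" shows "Suc k * a \<in> A"
  using assms by (induction k) auto

lemma semigroup_large:
  fixes A :: "nat set"
  assumes cl: "\<forall>a\<in>A. \<forall>b\<in>A. a + b \<in> A" and g: "Gcd A = 1" and z: "0 \<notin> A"
  shows "\<exists>M. \<forall>n\<ge>M. n \<in> A"
proof -
  have "A \<noteq> {}" using g by auto
  then obtain a0 where a0: "a0 \<in> A" by auto
  define D where "D = {e. e > 0 \<and> (\<exists>a\<in>A. \<exists>b\<in>A. a = b + e)}"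
  have "a0 > 0" using a0 z by (cases a0) auto
  moreover have "a0 + a0 \<in> A" using a0 cl by auto
  ultimately have "a0 \<in> D" unfolding D_def using a0 by blast
  define e where "e = (LEAST e. e \<in> D)"
  have eD: "e \<in> D" unfolding e_def using \<open>a0 \<in> D\<close> by (rule LeastI)
  have emin: "\<And>f. f \<in> D \<Longrightarrow> e \<le> f" unfolding e_def by (rule Least_le)
  obtain a b where ab: "a \<in> A" "b \<in> A" "a = b + e" "e > 0" using eD unfolding D_def by auto
  have "e = 1"
  proof (rule ccontr)
    assume "e \<noteq> 1"
    have "\<exists>c\<in>A. \<not> e dvd c"
    proof (rule ccontr)
      assume "\<not> (\<exists>c\<in>A. \<not> e dvd c)"
      then have "e dvd Gcd A" by (auto intro: Gcd_greatest)
      with g \<open>e \<noteq> 1\<close> show False by simp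
    qed
    then obtain c where c: "c \<in> A" "\<not> e dvd c" by auto
    define k where "k = c div e"
    define r where "r = c mod e"
    have cr: "c = k * e + r" and r0: "0 < r" and re: "r < e"
      using c ab(4) by (auto simp: k_def r_def mod_greater_zero_iff_not_dvd)
    have x1: "Suc k * a \<in> A" using mult_in[OF cl ab(1)] .
    have x2: "Suc k * b + c \<in> A" using mult_in[OF cl ab(2)] c cl by auto
    have "Suc k * a = (Suc k * b + c) + (e - r)"
      using ab(3) cr re by (simp add: algebra_simps)
    then have "e - r \<in> D" unfolding D_def using x1 x2 re by auto
    from emin[OF this] r0 re show False by linarith
  qed
  then have b1: "b + 1 \<in> A" using ab by simp
  have bpos: "b > 0" using ab(2) z by (cases b) auto
  have "\<forall>n\<ge>b * b. n \<in> A"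
  proof (intro allI impI)
    fix n assume n: "n \<ge> b * b"
    define q where "q = n div b"
    define r where "r = n mod b"
    have nq: "n = q * b + r" and rb: "r < b" using bpos by (auto simp: q_def r_def)
    have qb: "q \<ge> b"
    proof (rule ccontr)
      assume "\<not> q \<ge> b"
      then have "q + 1 \<le> b" by simp
      then have "(q + 1) * b \<le> b * b" by (rule mult_right_mono) simp
      with nq rb n show False by (simp add: algebra_simps)
    qed
    have n2: "n = (q - r) * b + r * (b + 1)"
      using nq rb qb by (simp add: algebra_simps diff_mult_distrib)
    have t1: "(q - r) * b \<in> A"
    proof -
      have "q - r = Suc (q - r - 1)" using qb rb by simp
      then show ?thesis using mult_in[OF cl ab(2), of "q - r - 1"] by simp
    qed
    show "n \<in> A"
    proof (cases r)
      case 0 then show ?thesis using n2 t1 by simp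
    next
      case (Suc r')
      then have "r * (b + 1) \<in> A" using mult_in[OF cl b1, of r'] by (simp add: mult.commute)
      then show ?thesis using n2 t1 cl by auto
    qed
  qed
  then show ?thesis by blast
qed


lemma primitive:
  assumes st: "stoch Q" and erg: "ergodic_chain Q"
  shows "\<exists>N. \<forall>s s'. 0 < Ppow Q N s s'"
proof -
  have "\<forall>s. \<exists>M. \<forall>n\<ge>M. n \<in> {n. n > 0 \<and> Ppow Q n s s > 0}"
  proof
    fix s
    show "\<exists>M. \<forall>n\<ge>M. n \<in> {n. n > 0 \<and> Ppow Q n s s > 0}"
    proof (rule semigroup_large)
      show "\<forall>a\<in>{n. 0 < n \<and> 0 < Ppow Q n s s}. \<forall>b\<in>{n. 0 < n \<and> 0 < Ppow Q n s s}. a + b \<in> {n. 0 < n \<and> 0 < Ppow Q n s s}"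
      proof (intro ballI)
        fix a b assume "a \<in> {n. 0 < n \<and> 0 < Ppow Q n s s}" "b \<in> {n. 0 < n \<and> 0 < Ppow Q n s s}"
        then have "0 < a" "0 < Ppow Q a s s" "0 < Ppow Q b s s" by auto
        moreover have "Ppow Q a s s * Ppow Q b s s \<le> Ppow Q (a + b) s s" by (rule Ppow_ge[OF st])
        ultimately show "a + b \<in> {n. 0 < n \<and> 0 < Ppow Q n s s}"
          by (auto intro: less_le_trans[OF mult_pos_pos])
      qed
      show "Gcd {n. 0 < n \<and> 0 < Ppow Q n s s} = 1"
        using erg by (simp add: ergodic_chain_def aperiodic_chain_def)
    qed auto
  qed
  then obtain M where M: "\<And>s n. n \<ge> M s \<Longrightarrow> 0 < Ppow Q n s s"
    by (metis (no_types, lifting) mem_Collect_eq)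
  have "\<forall>s s'. \<exists>k. Ppow Q k s s' > 0"
    using erg by (simp add: ergodic_chain_def irreducible_chain_def)
  then obtain k where k: "\<And>s s'. Ppow Q (k s s') s s' > 0" by (metis (no_types))
  define N where "N = (\<Sum>s\<in>UNIV. M s) + (\<Sum>s\<in>UNIV. \<Sum>s'\<in>UNIV. k s s')"
  have "\<forall>s s'. 0 < Ppow Q N s s'"
  proof (intro allI)
    fix s s'
    have "M s \<le> (\<Sum>s\<in>UNIV. M s)" by (rule member_le_sum) auto
    moreover have "k s s' \<le> (\<Sum>s'\<in>UNIV. k s s')" by (rule member_le_sum) auto
    moreover have "(\<Sum>s'\<in>UNIV. k s s') \<le> (\<Sum>s\<in>UNIV. \<Sum>s'\<in>UNIV. k s s')"
      by (rule member_le_sum[where f="\<lambda>s. \<Sum>s'\<in>UNIV. k s s'"]) auto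
    ultimately have le: "M s + k s s' \<le> N" unfolding N_def by linarith
    then have "0 < Ppow Q (N - k s s') s s" by (intro M) simp
    then have "0 < Ppow Q (N - k s s') s s * Ppow Q (k s s') s s'" using k by simp
    also have "\<dots> \<le> Ppow Q (N - k s s' + k s s') s s'" by (rule Ppow_ge[OF st])
    also have "N - k s s' + k s s' = N" using le by simp
    finally show "0 < Ppow Q N s s'" .
  qed
  then show ?thesis by blast
qed

lemma stat_pow:
  assumes "stationary_dist Q d" shows "d s = (\<Sum>s'\<in>UNIV. d s' * Ppow Q n s' s)"
proof (induction n arbitrary: s)
  case 0 then show ?case by (simp add: if_distrib cong: if_cong)
next
  case (Suc n)
  have "d s = (\<Sum>u\<in>UNIV. d u * Q u s)" using assms unfolding stationary_dist_def by blast
  also have "\<dots> = (\<Sum>u\<in>UNIV. (\<Sum>s'\<in>UNIV. d s' * Ppow Q n s' u) * Q u s)"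
    by (rule sum.cong[OF refl]) (metis Suc)
  also have "\<dots> = (\<Sum>s'\<in>UNIV. d s' * Ppow Q (Suc n) s' s)"
    by (simp add: sum_distrib_left sum_distrib_right mult.assoc) (rule sum.swap)
  finally show ?case .
qed

lemma stat_pos:
  assumes st: "stoch Q" and erg: "ergodic_chain Q" and sd: "stationary_dist Q d"
  shows "0 < d s"
proof -
  have nn: "\<And>s. 0 \<le> d s" and s1: "(\<Sum>s\<in>UNIV. d s) = 1" using sd unfolding stationary_dist_def by blast+
  have "\<exists>s0. d s0 > 0"
  proof (rule ccontr)
    assume "\<not> (\<exists>s0. d s0 > 0)"
    then have "\<And>s. d s = 0" using nn by (meson antisym not_less)
    with s1 show False by simp
  qed
  then obtain s0 where s0: "d s0 > 0" by auto
  obtain n where n: "Ppow Q n s0 s > 0" using erg by (auto simp: ergodic_chain_def irreducible_chain_def)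
  have "0 < d s0 * Ppow Q n s0 s" using s0 n by simp
  also have "\<dots> \<le> (\<Sum>s'\<in>UNIV. d s' * Ppow Q n s' s)"
    by (rule member_le_sum[where f="\<lambda>s'. d s' * Ppow Q n s' s"]) (auto intro!: mult_nonneg_nonneg nn Ppow_nonneg st)
  also have "\<dots> = d s" by (rule sym[OF stat_pow[OF sd]])
  finally show ?thesis .
qed

lemma l1_nonexp:
  assumes st: "stoch Q"
  shows "(\<Sum>s\<in>UNIV. \<bar>\<Sum>s'\<in>UNIV. \<mu> s' * Q s' s\<bar>) \<le> (\<Sum>s\<in>UNIV. \<bar>\<mu> s\<bar>)"
proof -
  have "(\<Sum>s\<in>UNIV. \<bar>\<Sum>s'\<in>UNIV. \<mu> s' * Q s' s\<bar>) \<le> (\<Sum>s\<in>UNIV. \<Sum>s'\<in>UNIV. \<bar>\<mu> s'\<bar> * Q s' s)"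
  proof (rule sum_mono)
    fix s
    have "\<bar>\<Sum>s'\<in>UNIV. \<mu> s' * Q s' s\<bar> \<le> (\<Sum>s'\<in>UNIV. \<bar>\<mu> s' * Q s' s\<bar>)" by (rule sum_abs)
    also have "\<dots> = (\<Sum>s'\<in>UNIV. \<bar>\<mu> s'\<bar> * Q s' s)"
      using st by (simp add: stoch_def abs_mult)
    finally show "\<bar>\<Sum>s'\<in>UNIV. \<mu> s' * Q s' s\<bar> \<le> (\<Sum>s'\<in>UNIV. \<bar>\<mu> s'\<bar> * Q s' s)" .
  qed
  also have "\<dots> = (\<Sum>s'\<in>UNIV. \<bar>\<mu> s'\<bar> * (\<Sum>s\<in>UNIV. Q s' s))"
    by (simp add: sum_distrib_left) (rule sum.swap)
  also have "\<dots> = (\<Sum>s\<in>UNIV. \<bar>\<mu> s\<bar>)" using st by (simp add: stoch_def)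
  finally show ?thesis .
qed

lemma l1_contr:
  fixes K :: "'s::finite \<Rightarrow> 's \<Rightarrow> real"
  assumes ge: "\<And>s s'. \<delta> \<le> K s s'" and rs: "\<And>s. (\<Sum>s'\<in>UNIV. K s s') = 1"
    and z: "(\<Sum>s\<in>UNIV. \<mu> s) = 0"
  shows "(\<Sum>s\<in>UNIV. \<bar>\<Sum>s'\<in>UNIV. \<mu> s' * K s' s\<bar>) \<le> (1 - real (card (UNIV :: 's set)) * \<delta>) * (\<Sum>s\<in>UNIV. \<bar>\<mu> s\<bar>)"
proof -
  have eq: "(\<Sum>s'\<in>UNIV. \<mu> s' * K s' s) = (\<Sum>s'\<in>UNIV. \<mu> s' * (K s' s - \<delta>))" for s
  proof -
    have "(\<Sum>s'\<in>UNIV. \<mu> s' * (K s' s - \<delta>)) = (\<Sum>s'\<in>UNIV. \<mu> s' * K s' s) - (\<Sum>s'\<in>UNIV. \<mu> s') * \<delta>"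
      by (simp add: algebra_simps sum_subtractf sum_distrib_right sum_distrib_left)
    then show ?thesis using z by simp
  qed
  have "(\<Sum>s\<in>UNIV. \<bar>\<Sum>s'\<in>UNIV. \<mu> s' * K s' s\<bar>) \<le> (\<Sum>s\<in>UNIV. \<Sum>s'\<in>UNIV. \<bar>\<mu> s'\<bar> * (K s' s - \<delta>))"
  proof (rule sum_mono)
    fix s
    have "\<bar>\<Sum>s'\<in>UNIV. \<mu> s' * K s' s\<bar> \<le> (\<Sum>s'\<in>UNIV. \<bar>\<mu> s' * (K s' s - \<delta>)\<bar>)" unfolding eq by (rule sum_abs)
    also have "\<dots> = (\<Sum>s'\<in>UNIV. \<bar>\<mu> s'\<bar> * (K s' s - \<delta>))"
      using ge by (simp add: abs_mult)
    finally show "\<bar>\<Sum>s'\<in>UNIV. \<mu> s' * K s' s\<bar> \<le> (\<Sum>s'\<in>UNIV. \<bar>\<mu> s'\<bar> * (K s' s - \<delta>))" .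
  qed
  also have "\<dots> = (\<Sum>s'\<in>UNIV. \<bar>\<mu> s'\<bar> * (\<Sum>s\<in>UNIV. K s' s - \<delta>))"
    by (simp add: sum_distrib_left) (rule sum.swap)
  also have "\<dots> = (\<Sum>s'\<in>UNIV. \<bar>\<mu> s'\<bar> * (1 - real (card (UNIV :: 's set)) * \<delta>))"
    using rs by (simp add: sum_subtractf)
  also have "\<dots> = (1 - real (card (UNIV :: 's set)) * \<delta>) * (\<Sum>s\<in>UNIV. \<bar>\<mu> s\<bar>)"
    by (simp add: sum_distrib_right mult.commute)
  finally show ?thesis .
qed


lemma dist_conv:
  fixes p :: "nat \<Rightarrow> 's::finite \<Rightarrow> real"
  assumes st: "stoch Q" and erg: "ergodic_chain Q" and sd: "stationary_dist Q d"
    and stp: "\<And>t s. p (Suc t) s = (\<Sum>u\<in>UNIV. p t u * Q u s)"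
    and tot: "\<And>t. (\<Sum>s\<in>UNIV. p t s) = 1"
  shows "(\<lambda>t. p t s) \<longlonglongrightarrow> d s"
proof -
  obtain N where Npos: "\<And>s s'. 0 < Ppow Q N s s'" using primitive[OF st erg] by blast
  define \<delta> where "\<delta> = Min (range (\<lambda>x. Ppow Q N (fst x) (snd x)))"
  have fin: "finite (range (\<lambda>x::'s \<times> 's. Ppow Q N (fst x) (snd x)))" by simp
  have "\<delta> \<in> range (\<lambda>x::'s \<times> 's. Ppow Q N (fst x) (snd x))" unfolding \<delta>_def
    by (rule Min_in[OF fin]) simp
  then have dpos: "0 < \<delta>" using Npos by auto
  have dle: "\<delta> \<le> Ppow Q N s s'" for s s'
    unfolding \<delta>_def by (rule Min_le[OF fin]) (rule range_eqI[of _ _ "(s, s')"], simp)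
  have dstat: "d s = (\<Sum>u\<in>UNIV. d u * Q u s)" for s using sd unfolding stationary_dist_def by blast
  have dtot: "(\<Sum>s\<in>UNIV. d s) = 1" using sd unfolding stationary_dist_def by blast
  have pN: "p (t + n) s = (\<Sum>u\<in>UNIV. p t u * Ppow Q n u s)" for t n s
  proof (induction n arbitrary: s)
    case 0 then show ?case by (simp add: if_distrib cong: if_cong)
  next
    case (Suc n)
    have "p (t + Suc n) s = (\<Sum>v\<in>UNIV. p (t + n) v * Q v s)" using stp by simp
    also have "\<dots> = (\<Sum>v\<in>UNIV. (\<Sum>u\<in>UNIV. p t u * Ppow Q n u v) * Q v s)"
      by (rule sum.cong[OF refl]) (metis Suc)
    also have "\<dots> = (\<Sum>u\<in>UNIV. p t u * Ppow Q (Suc n) u s)"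
      by (simp add: sum_distrib_left sum_distrib_right mult.assoc) (rule sum.swap)
    finally show ?case .
  qed
  define a where "a t = (\<Sum>s\<in>UNIV. \<bar>p t s - d s\<bar>)" for t
  have a_nn: "0 \<le> a t" for t unfolding a_def by (simp add: sum_nonneg)
  have a_dec: "a (Suc t) \<le> a t" for t
  proof -
    have "p (Suc t) s - d s = (\<Sum>u\<in>UNIV. (p t u - d u) * Q u s)" for s
      using stp[of t s] dstat[of s] by (simp add: left_diff_distrib sum_subtractf)
    then have "a (Suc t) = (\<Sum>s\<in>UNIV. \<bar>\<Sum>u\<in>UNIV. (p t u - d u) * Q u s\<bar>)" unfolding a_def by simp
    also have "\<dots> \<le> a t" unfolding a_def by (rule l1_nonexp[OF st])
    finally show ?thesis .
  qed
  define \<rho> where "\<rho> = 1 - real (card (UNIV :: 's set)) * \<delta>"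
  have rho1: "\<rho> < 1" unfolding \<rho>_def using dpos by (simp add: card_gt_0_iff)
  have a_contr: "a (t + N) \<le> \<rho> * a t" for t
  proof -
    have "p (t + N) s - d s = (\<Sum>u\<in>UNIV. (p t u - d u) * Ppow Q N u s)" for s
      using pN[of t N s] stat_pow[OF sd, of s N] by (simp add: left_diff_distrib sum_subtractf)
    then have "a (t + N) = (\<Sum>s\<in>UNIV. \<bar>\<Sum>u\<in>UNIV. (p t u - d u) * Ppow Q N u s\<bar>)" unfolding a_def by simp
    also have "\<dots> \<le> \<rho> * a t" unfolding a_def \<rho>_def
    proof (rule l1_contr)
      show "\<delta> \<le> Ppow Q N s s'" for s s' by (rule dle)
      show "(\<Sum>s'\<in>UNIV. Ppow Q N s s') = 1" for s by (rule Ppow_rowsum[OF st])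
      show "(\<Sum>s\<in>UNIV. p t s - d s) = 0" using tot[of t] dtot by (simp add: sum_subtractf)
    qed
    finally show ?thesis .
  qed
  have "decseq a" using a_dec by (rule decseq_SucI)
  then obtain L where aL: "a \<longlonglongrightarrow> L" and Lle: "\<forall>i. L \<le> a i"
    using a_nn by (metis decseq_convergent)
  have L0: "0 \<le> L" using aL a_nn by (intro LIMSEQ_le_const) auto
  have "(\<lambda>t. a (t + N)) \<longlonglongrightarrow> L" by (rule LIMSEQ_ignore_initial_segment[OF aL])
  moreover have "(\<lambda>t. \<rho> * a t) \<longlonglongrightarrow> \<rho> * L" by (intro tendsto_mult_left aL)
  ultimately have "L \<le> \<rho> * L" using a_contr by (intro LIMSEQ_le) auto
  then have "L = 0" using L0 rho1 by (metis mult_le_cancel_right1 not_le order.antisym)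
  then have a0: "a \<longlonglongrightarrow> 0" using aL by simp
  have "(\<lambda>t. p t s - d s) \<longlonglongrightarrow> 0"
  proof -
    have b: "\<bar>p t s - d s\<bar> \<le> a t" for t
      unfolding a_def by (rule member_le_sum[where f="\<lambda>s. \<bar>p t s - d s\<bar>"]) auto
    have m: "(\<lambda>t. - a t) \<longlonglongrightarrow> 0" using tendsto_minus[OF a0] by simp
    show ?thesis
    proof (rule tendsto_sandwich[OF _ _ m a0])
      show "\<forall>\<^sub>F t in sequentially. - a t \<le> p t s - d s"
        using b by (intro always_eventually allI) (metis abs_le_iff minus_le_iff)
      show "\<forall>\<^sub>F t in sequentially. p t s - d s \<le> a t"
        using b by (intro always_eventually allI) (metis abs_le_iff)
    qed
  qed
  then have "(\<lambda>t. (p t s - d s) + d s) \<longlonglongrightarrow> 0 + d s" by (intro tendsto_add) auto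
  then show ?thesis by simp
qed


lemma squeeze0:
  fixes f g :: "nat \<Rightarrow> real"
  assumes b: "\<And>n. \<bar>f n - l\<bar> \<le> g n" and g0: "g \<longlonglongrightarrow> 0"
  shows "f \<longlonglongrightarrow> l"
proof -
  have m: "(\<lambda>t. - g t) \<longlonglongrightarrow> 0" using tendsto_minus[OF g0] by simp
  have "(\<lambda>t. f t - l) \<longlonglongrightarrow> 0"
  proof (rule tendsto_sandwich[OF _ _ m g0])
    show "\<forall>\<^sub>F t in sequentially. - g t \<le> f t - l"
      using b by (intro always_eventually allI) (metis abs_le_iff minus_le_iff)
    show "\<forall>\<^sub>F t in sequentially. f t - l \<le> g t"
      using b by (intro always_eventually allI) (metis abs_le_iff)
  qed
  then have "(\<lambda>t. (f t - l) + l) \<longlonglongrightarrow> 0 + l" by (intro tendsto_add) auto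
  then show ?thesis by simp
qed

lemma supnorm_ge: "\<bar>v s\<bar> \<le> supnorm (v :: 's::finite \<Rightarrow> real)"
  unfolding supnorm_def by (rule Max_ge) auto

lemma supnorm_le: "(\<And>s. \<bar>v s\<bar> \<le> B) \<Longrightarrow> supnorm (v :: 's::finite \<Rightarrow> real) \<le> B"
  unfolding supnorm_def by (subst Max_le_iff) auto

lemma supnorm_nn: "0 \<le> supnorm (v :: 's::finite \<Rightarrow> real)"
  using supnorm_ge[of v undefined] by linarith

lemma decay:
  fixes a e :: "nat \<Rightarrow> real"
  assumes nn: "\<And>n. 0 \<le> a n" and rec: "\<And>n. a (Suc n) \<le> x * a n + e n"
    and e0: "e \<longlonglongrightarrow> 0" and x0: "0 \<le> x" and x1: "x < 1"
  shows "a \<longlonglongrightarrow> 0"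
proof (rule LIMSEQ_I)
  fix r :: real assume r: "0 < r"
  have "0 < r * (1 - x) / 2" using r x1 by simp
  from LIMSEQ_D[OF e0 this] obtain N where N0: "\<And>n. n \<ge> N \<Longrightarrow> norm (e n - 0) < r * (1 - x) / 2"
    by blast
  have N: "e n \<le> r * (1 - x) / 2" if "n \<ge> N" for n using N0[OF that] by simp
  have ind: "a (N + k) \<le> x ^ k * a N + r / 2" for k
  proof (induction k)
    case 0 then show ?case using r by simp
  next
    case (Suc k)
    have "a (N + Suc k) \<le> x * a (N + k) + e (N + k)" using rec[of "N + k"] by simp
    also have "\<dots> \<le> x * (x ^ k * a N + r / 2) + r * (1 - x) / 2"
      using N[of "N + k"] mult_left_mono[OF Suc x0] by simp
    also have "\<dots> = x ^ Suc k * a N + r / 2" by (simp add: field_simps)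
    finally show ?case .
  qed
  have lim: "(\<lambda>k. x ^ k * a N) \<longlonglongrightarrow> 0"
    using tendsto_mult_right[OF LIMSEQ_power_zero[of x], of "a N"] x0 x1 by simp
  obtain K where K: "\<And>k. k \<ge> K \<Longrightarrow> norm (x ^ k * a N - 0) < r / 2"
    using LIMSEQ_D[OF lim, of "r/2"] r by auto
  show "\<exists>no. \<forall>n\<ge>no. norm (a n - 0) < r"
  proof (intro exI allI impI)
    fix n assume n: "n \<ge> N + K"
    define k where "k = n - N"
    have k: "n = N + k" "k \<ge> K" using n by (auto simp: k_def)
    have "a n \<le> x ^ k * a N + r / 2" using ind k by simp
    also have "\<dots> < r" using K[OF k(2)] by simp
    finally show "norm (a n - 0) < r" using nn[of n] by simp
  qed
qed

lemma affine_contr: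
  fixes T :: "('s::finite \<Rightarrow> real) \<Rightarrow> 's \<Rightarrow> real"
  assumes Tdef: "\<And>v s. T v s = c * r s + c * (\<Sum>s'\<in>UNIV. B s s' * v s')"
    and Bnn: "\<And>s s'. 0 \<le> B s s'" and Brs: "\<And>s. (\<Sum>s'\<in>UNIV. B s s') = 1"
    and c0: "0 \<le> c" and c1: "c < 1"
  shows "supnorm (\<lambda>s. T v s - T w s) \<le> c * supnorm (\<lambda>s. v s - w s)"
proof (rule supnorm_le)
  fix s
  have "T v s - T w s = c * (\<Sum>s'\<in>UNIV. B s s' * (v s' - w s'))"
    unfolding Tdef by (simp add: algebra_simps sum_subtractf)
  also have "\<bar>\<dots>\<bar> = c * \<bar>\<Sum>s'\<in>UNIV. B s s' * (v s' - w s')\<bar>" using c0 by (simp add: abs_mult)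
  also have "\<dots> \<le> c * (\<Sum>s'\<in>UNIV. B s s' * supnorm (\<lambda>s. v s - w s))"
  proof (intro mult_left_mono c0)
    have "\<bar>\<Sum>s'\<in>UNIV. B s s' * (v s' - w s')\<bar> \<le> (\<Sum>s'\<in>UNIV. \<bar>B s s' * (v s' - w s')\<bar>)" by (rule sum_abs)
    also have "\<dots> \<le> (\<Sum>s'\<in>UNIV. B s s' * supnorm (\<lambda>s. v s - w s))"
      by (rule sum_mono) (simp add: abs_mult Bnn mult_left_mono supnorm_ge[of "\<lambda>s. v s - w s", simplified])
    finally show "\<bar>\<Sum>s'\<in>UNIV. B s s' * (v s' - w s')\<bar> \<le> (\<Sum>s'\<in>UNIV. B s s' * supnorm (\<lambda>s. v s - w s))" .
  qed
  also have "\<dots> = c * supnorm (\<lambda>s. v s - w s)" by (simp add: sum_distrib_right[symmetric] Brs)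
  finally show "\<bar>T v s - T w s\<bar> \<le> c * supnorm (\<lambda>s. v s - w s)" .
qed

lemma affine_fix:
  fixes T :: "('s::finite \<Rightarrow> real) \<Rightarrow> 's \<Rightarrow> real"
  assumes Tdef: "\<And>v s. T v s = c * r s + c * (\<Sum>s'\<in>UNIV. B s s' * v s')"
    and Bnn: "\<And>s s'. 0 \<le> B s s'" and Brs: "\<And>s. (\<Sum>s'\<in>UNIV. B s s') = 1"
    and c0: "0 \<le> c" and c1: "c < 1"
  shows "\<exists>vb. T vb = vb \<and> (\<forall>v0 s. (\<lambda>n. (T ^^ n) v0 s) \<longlonglongrightarrow> vb s)"
proof -
  note con = affine_contr[OF Tdef Bnn Brs c0 c1]
  define vn where "vn n = (T ^^ n) (\<lambda>_. 0)" for n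
  define C where "C = supnorm (\<lambda>s. vn 1 s - vn 0 s)"
  have dn: "supnorm (\<lambda>s. vn (Suc n) s - vn n s) \<le> c ^ n * C" for n
  proof (induction n)
    case 0 then show ?case by (simp add: C_def)
  next
    case (Suc n)
    have "supnorm (\<lambda>s. vn (Suc (Suc n)) s - vn (Suc n) s) = supnorm (\<lambda>s. T (vn (Suc n)) s - T (vn n) s)"
      by (simp add: vn_def)
    also have "\<dots> \<le> c * supnorm (\<lambda>s. vn (Suc n) s - vn n s)" by (rule con)
    also have "\<dots> \<le> c * (c ^ n * C)" using Suc c0 by (rule mult_left_mono)
    finally show ?case by simp
  qed
  define vb where "vb s = suminf (\<lambda>n. vn (Suc n) s - vn n s)" for s
  have vconv: "(\<lambda>n. vn n s) \<longlonglongrightarrow> vb s" for s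
  proof -
    have "summable (\<lambda>n. vn (Suc n) s - vn n s)"
    proof (rule summable_comparison_test)
      show "\<exists>N. \<forall>n\<ge>N. norm (vn (Suc n) s - vn n s) \<le> C * c ^ n"
        using dn order.trans[OF supnorm_ge[of "\<lambda>s. vn (Suc _) s - vn _ s"]] by (auto simp: mult.commute)
      show "summable (\<lambda>n. C * c ^ n)" using c0 c1 by (intro summable_mult summable_geometric) simp
    qed
    then have "(\<lambda>n. \<Sum>i<n. vn (Suc i) s - vn i s) \<longlonglongrightarrow> vb s" unfolding vb_def by (rule summable_LIMSEQ)
    then have "(\<lambda>n. vn n s - vn 0 s) \<longlonglongrightarrow> vb s" by (simp only: sum_lessThan_telescope[of "\<lambda>i. vn i s"])
    then show ?thesis by (simp add: vn_def)
  qed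
  have fixT: "T vb = vb"
  proof (rule ext)
    fix s
    have "(\<lambda>n. T (vn n) s) \<longlonglongrightarrow> T vb s"
      unfolding Tdef by (intro tendsto_intros vconv)
    moreover have "(\<lambda>n. T (vn n) s) \<longlonglongrightarrow> vb s"
      using LIMSEQ_Suc[OF vconv[of s]] by (simp add: vn_def)
    ultimately show "T vb s = vb s" by (rule LIMSEQ_unique)
  qed
  have "(\<lambda>n. (T ^^ n) v0 s) \<longlonglongrightarrow> vb s" for v0 s
  proof (rule squeeze0)
    have "supnorm (\<lambda>s. (T ^^ n) v0 s - vb s) \<le> c ^ n * supnorm (\<lambda>s. v0 s - vb s)" for n
    proof (induction n)
      case 0 then show ?case by simp
    next
      case (Suc n)
      have "supnorm (\<lambda>s. (T ^^ Suc n) v0 s - vb s) = supnorm (\<lambda>s. T ((T ^^ n) v0) s - T vb s)"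
        using fixT by simp
      also have "\<dots> \<le> c * supnorm (\<lambda>s. (T ^^ n) v0 s - vb s)" by (rule con)
      also have "\<dots> \<le> c * (c ^ n * supnorm (\<lambda>s. v0 s - vb s))" using Suc c0 by (rule mult_left_mono)
      finally show ?case by simp
    qed
    then show "\<bar>(T ^^ n) v0 s - vb s\<bar> \<le> c ^ n * supnorm (\<lambda>s. v0 s - vb s)" for n
      using order.trans[OF supnorm_ge[of "\<lambda>s. (T ^^ n) v0 s - vb s"]] by blast
    show "(\<lambda>n. c ^ n * supnorm (\<lambda>s. v0 s - vb s)) \<longlonglongrightarrow> 0"
      using tendsto_mult_right[OF LIMSEQ_power_zero[of c], of "supnorm (\<lambda>s. v0 s - vb s)"] c0 c1 by simp
  qed
  with fixT show ?thesis by blast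
qed


lemma sum_shift1: "(\<Sum>i\<in>{1..t}. g i) = (\<Sum>k<t. g (Suc k) :: real)"
  by (induction t) (simp_all add: atLeastAtMostSuc_conv)

theorem theorem4p3:
  fixes P :: "'s::finite \<Rightarrow> 'a::finite \<Rightarrow> 's \<Rightarrow> real"
    and pol :: "'s \<Rightarrow> 'a \<Rightarrow> real"
    and R :: "'s \<Rightarrow> 'a \<Rightarrow> real"
    and d0 d :: "'s \<Rightarrow> real"
    and \<gamma> lam :: real
  assumes "is_mdp P d0" and "is_policy pol"
    and "0 \<le> \<gamma>" and "\<gamma> < 1" and "0 \<le> lam" and "lam \<le> 1"
    and "ergodic_chain (Pfwd P pol)"
    and "stationary_dist (Pfwd P pol) d"
  shows "\<exists>vb :: 's \<Rightarrow> real.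
           (\<forall>s. (\<lambda>t. back_cond_return P pol d0 R \<gamma> lam t s) \<longlonglongrightarrow> vb s)
         \<and> (\<exists>c. 0 \<le> c \<and> c < 1 \<and>
              (\<forall>v w. supnorm (\<lambda>s. Tback P pol d R \<gamma> lam v s - Tback P pol d R \<gamma> lam w s)
                       \<le> c * supnorm (\<lambda>s. v s - w s)))
         \<and> (\<forall>v0 s. (\<lambda>n. (Tback P pol d R \<gamma> lam ^^ n) v0 s) \<longlonglongrightarrow> vb s)"
proof -
  note mdp = assms(1) and polc = assms(2) and erg = assms(7) and sd = assms(8)
  define Q where "Q = Pfwd P pol"
  define x where "x = lam * \<gamma>"
  have x0: "0 \<le> x" using assms(3,5) by (simp add: x_def)
  have x1: "x < 1"
  proof -
    have "lam * \<gamma> \<le> 1 * \<gamma>" using assms(3,6) by (intro mult_right_mono) auto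
    then show ?thesis using assms(4) by (simp add: x_def)
  qed
  have Pnn: "\<And>s a s'. 0 \<le> P s a s'" and Prs: "\<And>s a. (\<Sum>s'\<in>UNIV. P s a s') = 1"
    and d0nn: "\<And>s. 0 \<le> d0 s" and d0s: "(\<Sum>s\<in>UNIV. d0 s) = 1"
    using mdp unfolding is_mdp_def by blast+
  have pnn: "\<And>s a. 0 \<le> pol s a" and prs: "\<And>s. (\<Sum>a\<in>UNIV. pol s a) = 1"
    using polc unfolding is_policy_def by blast+
  have st: "stoch Q"
  proof -
    have "(\<Sum>s'\<in>UNIV. Q s s') = 1" for s
    proof -
      have "(\<Sum>s'\<in>UNIV. Q s s') = (\<Sum>a\<in>UNIV. pol s a * (\<Sum>s'\<in>UNIV. P s a s'))"
        unfolding Q_def Pfwd_def by (simp add: sum_distrib_left) (rule sum.swap)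
      then show ?thesis by (simp add: Prs prs)
    qed
    moreover have "0 \<le> Q s s'" for s s'
      unfolding Q_def Pfwd_def by (auto intro!: sum_nonneg mult_nonneg_nonneg pnn Pnn)
    ultimately show ?thesis unfolding stoch_def by blast
  qed
  have ergQ: "ergodic_chain Q" and sdQ: "stationary_dist Q d" using erg sd by (simp_all add: Q_def)
  have dpos: "\<And>s. 0 < d s" using stat_pos[OF st ergQ sdQ] .
  have dstat: "d s = (\<Sum>u\<in>UNIV. d u * Q u s)" for s using sdQ unfolding stationary_dist_def by blast
  define B where "B s s' = Pback P pol d s s'" for s s'
  define rb where "rb s = rback P pol d R s" for s
  define T where "T = Tback P pol d R \<gamma> lam"
  have Tdef: "T v s = x * rb s + x * (\<Sum>s'\<in>UNIV. B s s' * v s')" for v s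
    unfolding T_def Tback_def x_def rb_def B_def by simp
  have Bnn: "0 \<le> B s s'" for s s'
    unfolding B_def Pback_def using st dpos[of s] dpos[of s'] by (auto simp: stoch_def Q_def[symmetric])
  have Brs: "(\<Sum>s'\<in>UNIV. B s s') = 1" for s
  proof -
    have "(\<Sum>s'\<in>UNIV. B s s') = (\<Sum>s'\<in>UNIV. d s' * Q s' s) / d s"
      unfolding B_def Pback_def Q_def by (simp add: sum_divide_distrib)
    also have "\<dots> = 1" unfolding Q_def[symmetric] using dstat[of s, symmetric] dpos[of s] by simp
    finally show ?thesis .
  qed
  obtain vb where fixT: "T vb = vb" and conv: "\<And>v0 s. (\<lambda>n. (T ^^ n) v0 s) \<longlonglongrightarrow> vb s"
    using affine_fix[where T=T and c=x and r=rb and B=B, OF Tdef Bnn Brs x0 x1] by blast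
  have contr: "supnorm (\<lambda>s. T v s - T w s) \<le> x * supnorm (\<lambda>s. v s - w s)" for v w
    by (rule affine_contr[where T=T and c=x and r=rb and B=B, OF Tdef Bnn Brs x0 x1])
  define sp where "sp t s = state_prob P pol d0 t s" for t s
  have sp_step: "sp (Suc t) s = (\<Sum>u\<in>UNIV. sp t u * Q u s)" for t s
    unfolding sp_def state_prob_def Q_def
    by (simp add: sum_distrib_left sum_distrib_right mult.assoc) (rule sum.swap)
  have sp_tot: "(\<Sum>s\<in>UNIV. sp t s) = 1" for t
  proof -
    have "(\<Sum>s\<in>UNIV. sp t s) = (\<Sum>s0\<in>UNIV. d0 s0 * (\<Sum>s\<in>UNIV. Ppow Q t s0 s))"
      unfolding sp_def state_prob_def Q_def by (simp add: sum_distrib_left) (rule sum.swap)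
    then show ?thesis using Ppow_rowsum[OF st] d0s by simp
  qed
  have sp_conv: "(\<lambda>t. sp t s) \<longlonglongrightarrow> d s" for s
    by (rule dist_conv[where p=sp, OF st ergQ sdQ sp_step sp_tot])
  define w where "w j s'' = (\<Sum>s'\<in>UNIV. \<Sum>a\<in>UNIV. sp j s' * pol s' a * R s' a * P s' a s'')" for j s''
  define wl where "wl s'' = (\<Sum>s'\<in>UNIV. \<Sum>a\<in>UNIV. d s' * pol s' a * R s' a * P s' a s'')" for s''
  define rj where "rj j k s = reward_joint P pol d0 R j k s" for j k s
  have rj_eq: "rj j k s = (\<Sum>s''\<in>UNIV. w j s'' * Ppow Q k s'' s)" for j k s
  proof -
    have "rj j k s = (\<Sum>s'\<in>UNIV. \<Sum>s''\<in>UNIV. \<Sum>a\<in>UNIV. sp j s' * pol s' a * R s' a * P s' a s'' * Ppow Q k s'' s)"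
      unfolding rj_def reward_joint_def sp_def Q_def by (rule sum.cong[OF refl]) (rule sum.swap)
    also have "\<dots> = (\<Sum>s''\<in>UNIV. \<Sum>s'\<in>UNIV. \<Sum>a\<in>UNIV. sp j s' * pol s' a * R s' a * P s' a s'' * Ppow Q k s'' s)"
      by (rule sum.swap)
    also have "\<dots> = (\<Sum>s''\<in>UNIV. w j s'' * Ppow Q k s'' s)"
      unfolding w_def by (simp add: sum_distrib_right)
    finally show ?thesis .
  qed
  have rj0: "rj j 0 s = w j s" for j s
    unfolding rj_eq by (simp add: if_distrib cong: if_cong)
  have rjS: "rj j (Suc k) s = (\<Sum>u\<in>UNIV. rj j k u * Q u s)" for j k s
    unfolding rj_eq by (simp add: sum_distrib_left sum_distrib_right mult.assoc) (rule sum.swap)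
  have w_conv: "(\<lambda>j. w j s) \<longlonglongrightarrow> wl s" for s
    unfolding w_def wl_def by (intro tendsto_sum tendsto_mult_right sp_conv)
  define U where "U t s = (\<Sum>k<t. x ^ Suc k * rj (t - Suc k) k s)" for t s
  have bcr: "back_cond_return P pol d0 R \<gamma> lam t s = U t s / sp t s" for t s
    unfolding back_cond_return_def U_def sp_def rj_def x_def sum_shift1 by simp
  have U_step: "U (Suc t) s = x * w t s + x * (\<Sum>u\<in>UNIV. U t u * Q u s)" for t s
  proof -
    have "U (Suc t) s = (\<Sum>k<Suc t. x ^ Suc k * rj (t - k) k s)" unfolding U_def by simp
    also have "\<dots> = x * rj t 0 s + (\<Sum>k<t. x ^ Suc (Suc k) * rj (t - Suc k) (Suc k) s)"
      by (subst sum.lessThan_Suc_shift) simp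
    also have "(\<Sum>k<t. x ^ Suc (Suc k) * rj (t - Suc k) (Suc k) s)
        = (\<Sum>k<t. \<Sum>u\<in>UNIV. x * (x ^ Suc k * rj (t - Suc k) k u * Q u s))"
      unfolding rjS by (simp add: sum_distrib_left mult_ac)
    also have "\<dots> = (\<Sum>u\<in>UNIV. \<Sum>k<t. x * (x ^ Suc k * rj (t - Suc k) k u * Q u s))"
      by (rule sum.swap)
    also have "\<dots> = x * (\<Sum>u\<in>UNIV. U t u * Q u s)"
      unfolding U_def by (simp add: sum_distrib_left sum_distrib_right)
    finally show ?thesis by (simp add: rj0)
  qed
  define us where "us s = d s * vb s" for s
  have us_fix: "us s = x * wl s + x * (\<Sum>u\<in>UNIV. us u * Q u s)" for s
  proof -
    have "vb s = x * rb s + x * (\<Sum>s'\<in>UNIV. B s s' * vb s')" using Tdef[of vb s] fixT by simp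
    then have "us s = x * (d s * rb s) + x * (\<Sum>s'\<in>UNIV. d s * B s s' * vb s')"
      unfolding us_def by (simp add: algebra_simps sum_distrib_left)
    also have "d s * rb s = wl s"
      unfolding rb_def rback_def wl_def using dpos[of s] by (simp add: mult_ac)
    also have "(\<Sum>s'\<in>UNIV. d s * B s s' * vb s') = (\<Sum>u\<in>UNIV. us u * Q u s)"
      unfolding B_def Pback_def us_def Q_def using dpos[of s] by (intro sum.cong refl) (simp add: field_simps)
    finally show ?thesis .
  qed
  define e where "e t s = U t s - us s" for t s
  define A where "A t = (\<Sum>s\<in>UNIV. \<bar>e t s\<bar>)" for t
  define eps where "eps t = x * (\<Sum>s\<in>UNIV. \<bar>w t s - wl s\<bar>)" for t
  have A_nn: "0 \<le> A t" for t unfolding A_def by (simp add: sum_nonneg)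
  have A_rec: "A (Suc t) \<le> x * A t + eps t" for t
  proof -
    have es: "e (Suc t) s = x * (w t s - wl s) + x * (\<Sum>u\<in>UNIV. e t u * Q u s)" for s
    proof -
      have "e (Suc t) s = (x * w t s + x * (\<Sum>u\<in>UNIV. U t u * Q u s)) - (x * wl s + x * (\<Sum>u\<in>UNIV. us u * Q u s))"
        unfolding e_def using U_step[of t s] us_fix[of s] by linarith
      also have "\<dots> = x * (w t s - wl s) + x * (\<Sum>u\<in>UNIV. e t u * Q u s)"
        unfolding e_def by (simp add: algebra_simps sum_subtractf)
      finally show ?thesis .
    qed
    have "A (Suc t) \<le> (\<Sum>s\<in>UNIV. x * \<bar>w t s - wl s\<bar> + x * \<bar>\<Sum>u\<in>UNIV. e t u * Q u s\<bar>)"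
    proof -
      have tri: "\<bar>x * a + x * b\<bar> \<le> x * \<bar>a\<bar> + x * \<bar>b\<bar>" for a b
        using abs_triangle_ineq[of "x * a" "x * b"] x0 by (simp add: abs_mult)
      show ?thesis unfolding A_def es by (rule sum_mono) (rule tri)
    qed
    also have "\<dots> = eps t + x * (\<Sum>s\<in>UNIV. \<bar>\<Sum>u\<in>UNIV. e t u * Q u s\<bar>)"
      unfolding eps_def by (simp add: sum.distrib sum_distrib_left)
    also have "\<dots> \<le> eps t + x * A t"
      unfolding A_def by (intro add_left_mono mult_left_mono l1_nonexp[OF st] x0)
    finally show ?thesis by simp
  qed
  have eps0: "eps \<longlonglongrightarrow> 0"
  proof -
    have "(\<lambda>t. x * (\<Sum>s\<in>UNIV. \<bar>w t s - wl s\<bar>)) \<longlonglongrightarrow> x * (\<Sum>s\<in>UNIV. \<bar>wl s - wl s\<bar>)"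
      by (intro tendsto_intros w_conv)
    then show ?thesis unfolding eps_def by simp
  qed
  have A0: "A \<longlonglongrightarrow> 0" by (rule decay[OF A_nn A_rec eps0 x0 x1])
  have U_conv: "(\<lambda>t. U t s) \<longlonglongrightarrow> us s" for s
  proof (rule squeeze0[OF _ A0])
    show "\<bar>U t s - us s\<bar> \<le> A t" for t
      unfolding A_def e_def by (rule member_le_sum[where f="\<lambda>s. \<bar>U t s - us s\<bar>"]) auto
  qed
  have bcr_conv: "(\<lambda>t. back_cond_return P pol d0 R \<gamma> lam t s) \<longlonglongrightarrow> vb s" for s
  proof -
    have "(\<lambda>t. U t s / sp t s) \<longlonglongrightarrow> us s / d s"
      using dpos[of s] by (intro tendsto_divide U_conv sp_conv) auto
    then show ?thesis unfolding bcr us_def using dpos[of s] by simp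
  qed
  show ?thesis
    using bcr_conv contr conv x0 x1 unfolding T_def by blast
qed

end
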